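(* Suppose $0\le\alpha_3\le\alpha_2\le\alpha_1\le\pi/4$, and define $\zeta_0=\cos\alpha_1\cos\alpha_2\cos\alpha_3-\mathrm{i}\sin\alpha_1\sin\alpha_2\sin\alpha_3$, $\zeta_1=\cos\alpha_1\sin\alpha_2\sin\alpha_3-\mathrm{i}\sin\alpha_1\cos\alpha_2\cos\alpha_3$, $\zeta_2=\sin\alpha_1\cos\alpha_2\sin\alpha_3-\mathrm{i}\cos\alpha_1\sin\alpha_2\cos\alpha_3$, $\zeta_3=\sin\alpha_1\sin\alpha_2\cos\alpha_3-\mathrm{i}\cos\alpha_1\cos\alpha_2\sin\alpha_3$. Then $|\zeta_0|\ge|\zeta_1|\ge|\zeta_2|\ge|\zeta_3|\ge0$. The first inequality is an equality iff $\alpha_1=\pi/4$; the second iff $\alpha_2=\alpha_1$; the third iff $\alpha_1=\pi/4$ or $\alpha_3=\alpha_2$; the last iff $\alpha_2=\alpha_3=0$.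
   Context: The numbers $|\zeta_0|,|\zeta_1|,|\zeta_2|,|\zeta_3|$ are the Schmidt coefficients of the two-qubit unitary $U(\alpha_1,\alpha_2,\alpha_3)=\exp[-\mathrm{i}\sum_{k=1}^3\alpha_k\sigma_k\otimes\sigma_k]=\sum_{k=0}^3\zeta_k\sigma_k\otimes\sigma_k$ ($\sigma_0=I$, $\sigma_k$ Pauli matrices), i.e. of its Choi state with respect to the bipartition $AA'|BB'$. *)

theory Defs
  imports Complex_Main
begin

text \<open>The coefficients zeta_k(a1,a2,a3) of U = sum_k zeta_k sigma_k (x) sigma_k.\<close>

definition zeta0 :: "real \<Rightarrow> real \<Rightarrow> real \<Rightarrow> complex" where
  "zeta0 a1 a2 a3 = complex_of_real (cos a1 * cos a2 * cos a3) - \<i> * complex_of_real (sin a1 * sin a2 * sin a3)"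

definition zeta1 :: "real \<Rightarrow> real \<Rightarrow> real \<Rightarrow> complex" where
  "zeta1 a1 a2 a3 = complex_of_real (cos a1 * sin a2 * sin a3) - \<i> * complex_of_real (sin a1 * cos a2 * cos a3)"

definition zeta2 :: "real \<Rightarrow> real \<Rightarrow> real \<Rightarrow> complex" where
  "zeta2 a1 a2 a3 = complex_of_real (sin a1 * cos a2 * sin a3) - \<i> * complex_of_real (cos a1 * sin a2 * cos a3)"

definition zeta3 :: "real \<Rightarrow> real \<Rightarrow> real \<Rightarrow> complex" where
  "zeta3 a1 a2 a3 = complex_of_real (sin a1 * sin a2 * cos a3) - \<i> * complex_of_real (cos a1 * cos a2 * sin a3)"

end

theory Submission
  imports Defs
begin

lemma cos_facts: assumes "0 \<le> x" "x \<le> pi/2" shows "cos x \<ge> 0 \<and> (cos x = 0 \<longleftrightarrow> x = pi/2)"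
proof -
  have "x < pi/2 \<Longrightarrow> cos x > 0" using assms cos_gt_zero_pi[of x] by linarith
  show ?thesis
  proof (cases "x = pi/2")
    case False thus ?thesis using assms \<open>x < pi/2 \<Longrightarrow> cos x > 0\<close> by auto
  next
    case True thus ?thesis by (simp only: cos_pi_half) simp
  qed
qed

lemma sin_facts: assumes "0 \<le> x" "x \<le> pi/2" shows "sin x \<ge> 0 \<and> (sin x = 0 \<longleftrightarrow> x = 0)"
proof -
  have "0 < x \<Longrightarrow> sin x > 0" using assms sin_gt_zero[of x] pi_gt_zero by linarith
  show ?thesis
  proof (cases "x = 0")
    case False thus ?thesis using assms \<open>0 < x \<Longrightarrow> sin x > 0\<close> by auto
  next
    case True thus ?thesis by simp
  qed
qed

lemma sq_le_iff: "sqrt a \<le> sqrt b \<longleftrightarrow> a \<le> b" by simp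

theorem lemma8:
  fixes a1 a2 a3 :: real
  assumes "0 \<le> a3" "a3 \<le> a2" "a2 \<le> a1" "a1 \<le> pi / 4"
  shows "cmod (zeta0 a1 a2 a3) \<ge> cmod (zeta1 a1 a2 a3)
       \<and> cmod (zeta1 a1 a2 a3) \<ge> cmod (zeta2 a1 a2 a3)
       \<and> cmod (zeta2 a1 a2 a3) \<ge> cmod (zeta3 a1 a2 a3)
       \<and> cmod (zeta3 a1 a2 a3) \<ge> 0
       \<and> (cmod (zeta0 a1 a2 a3) = cmod (zeta1 a1 a2 a3) \<longleftrightarrow> a1 = pi / 4)
       \<and> (cmod (zeta1 a1 a2 a3) = cmod (zeta2 a1 a2 a3) \<longleftrightarrow> a2 = a1)
       \<and> (cmod (zeta2 a1 a2 a3) = cmod (zeta3 a1 a2 a3) \<longleftrightarrow> a1 = pi / 4 \<or> a3 = a2)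
       \<and> (cmod (zeta3 a1 a2 a3) = 0 \<longleftrightarrow> a2 = 0 \<and> a3 = 0)"
proof -
  define c1 where "c1 = cos a1" define c2 where "c2 = cos a2" define c3 where "c3 = cos a3"
  define s1 where "s1 = sin a1" define s2 where "s2 = sin a2" define s3 where "s3 = sin a3"
  define N0 where "N0 = (c1*c2*c3)^2 + (s1*s2*s3)^2"
  define N1 where "N1 = (c1*s2*s3)^2 + (s1*c2*c3)^2"
  define N2 where "N2 = (s1*c2*s3)^2 + (c1*s2*c3)^2"
  define N3 where "N3 = (s1*s2*c3)^2 + (c1*c2*s3)^2"
  have z0: "cmod (zeta0 a1 a2 a3) = sqrt N0" unfolding N0_def zeta0_def cmod_def c1_def c2_def c3_def s1_def s2_def s3_def
    by (simp add: power2_eq_square)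
  have z1: "cmod (zeta1 a1 a2 a3) = sqrt N1" unfolding N1_def zeta1_def cmod_def c1_def c2_def c3_def s1_def s2_def s3_def
    by (simp add: power2_eq_square)
  have z2: "cmod (zeta2 a1 a2 a3) = sqrt N2" unfolding N2_def zeta2_def cmod_def c1_def c2_def c3_def s1_def s2_def s3_def
    by (simp add: power2_eq_square)
  have z3: "cmod (zeta3 a1 a2 a3) = sqrt N3" unfolding N3_def zeta3_def cmod_def c1_def c2_def c3_def s1_def s2_def s3_def
    by (simp add: power2_eq_square)
  have p1: "s1^2 + c1^2 = 1" "s2^2 + c2^2 = 1" "s3^2 + c3^2 = 1" unfolding s1_def c1_def s2_def c2_def s3_def c3_def by simp_all
  have d01: "N0 - N1 = cos(2*a1)*cos(a2+a3)*cos(a2-a3)"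
  proof -
    have "cos(2*a1)*cos(a2+a3)*cos(a2-a3) = (c1^2-s1^2)*(c2*c3-s2*s3)*(c2*c3+s2*s3)"
      unfolding c1_def s1_def c2_def s2_def c3_def s3_def by (simp add: cos_add cos_diff cos_double)
    thus ?thesis unfolding N0_def N1_def by (simp add: algebra_simps power2_eq_square)
  qed
  have d12: "N1 - N2 = cos(2*a3)*sin(a1+a2)*sin(a1-a2)"
  proof -
    have "cos(2*a3)*sin(a1+a2)*sin(a1-a2) = (c3^2-s3^2)*(s1*c2+c1*s2)*(s1*c2-c1*s2)"
      unfolding c1_def s1_def c2_def s2_def c3_def s3_def by (simp add: sin_add sin_diff cos_double)
    thus ?thesis unfolding N2_def N1_def by (simp add: algebra_simps power2_eq_square)
  qed
  have d23: "N2 - N3 = cos(2*a1)*sin(a2+a3)*sin(a2-a3)"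
  proof -
    have "cos(2*a1)*sin(a2+a3)*sin(a2-a3) = (c1^2-s1^2)*(s2*c3+c2*s3)*(s2*c3-c2*s3)"
      unfolding c1_def s1_def c2_def s2_def c3_def s3_def by (simp add: sin_add sin_diff cos_double)
    thus ?thesis unfolding N2_def N3_def by (simp add: algebra_simps power2_eq_square)
  qed
  have pi0: "pi > 0" by simp
  have f1: "cos(2*a1) \<ge> 0 \<and> (cos(2*a1) = 0 \<longleftrightarrow> a1 = pi/4)" using cos_facts[of "2*a1"] assms by auto
  have f3: "cos(2*a3) \<ge> 0 \<and> (cos(2*a3) = 0 \<longleftrightarrow> a3 = pi/4)" using cos_facts[of "2*a3"] assms by auto
  have f23p: "cos(a2+a3) \<ge> 0 \<and> (cos(a2+a3) = 0 \<longleftrightarrow> a2+a3 = pi/2)" using cos_facts[of "a2+a3"] assms by auto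
  have f23m: "cos(a2-a3) > 0" using cos_facts[of "a2-a3"] assms pi0 by auto
  have g12p: "sin(a1+a2) \<ge> 0 \<and> (sin(a1+a2) = 0 \<longleftrightarrow> a1+a2 = 0)" using sin_facts[of "a1+a2"] assms by auto
  have g12m: "sin(a1-a2) \<ge> 0 \<and> (sin(a1-a2) = 0 \<longleftrightarrow> a1-a2 = 0)" using sin_facts[of "a1-a2"] assms by auto
  have g23p: "sin(a2+a3) \<ge> 0 \<and> (sin(a2+a3) = 0 \<longleftrightarrow> a2+a3 = 0)" using sin_facts[of "a2+a3"] assms by auto
  have g23m: "sin(a2-a3) \<ge> 0 \<and> (sin(a2-a3) = 0 \<longleftrightarrow> a2-a3 = 0)" using sin_facts[of "a2-a3"] assms by auto
  have e01: "N0 \<ge> N1 \<and> (N0 = N1 \<longleftrightarrow> a1 = pi/4)"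
  proof -
    have "N0 - N1 \<ge> 0" using d01 f1 f23p f23m by simp
    moreover have "N0 - N1 = 0 \<longleftrightarrow> a1 = pi/4" using d01 f1 f23p f23m assms by auto
    ultimately show ?thesis by auto
  qed
  have e12: "N1 \<ge> N2 \<and> (N1 = N2 \<longleftrightarrow> a2 = a1)"
  proof -
    have "N1 - N2 \<ge> 0" using d12 f3 g12p g12m by simp
    moreover have "N1 - N2 = 0 \<longleftrightarrow> a2 = a1" using d12 f3 g12p g12m assms by auto
    ultimately show ?thesis by auto
  qed
  have e23: "N2 \<ge> N3 \<and> (N2 = N3 \<longleftrightarrow> a1 = pi/4 \<or> a3 = a2)"
  proof -
    have "N2 - N3 \<ge> 0" using d23 f1 g23p g23m by simp
    moreover have "N2 - N3 = 0 \<longleftrightarrow> a1 = pi/4 \<or> a3 = a2" using d23 f1 g23p g23m assms by auto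
    ultimately show ?thesis by auto
  qed
  have cp: "c1 > 0" "c2 > 0" "c3 > 0" unfolding c1_def c2_def c3_def
    using cos_facts[of a1] cos_facts[of a2] cos_facts[of a3] assms pi0 by auto
  have s0: "s1 = 0 \<longleftrightarrow> a1 = 0" "s2 = 0 \<longleftrightarrow> a2 = 0" "s3 = 0 \<longleftrightarrow> a3 = 0" unfolding s1_def s2_def s3_def
    using sin_facts[of a1] sin_facts[of a2] sin_facts[of a3] assms pi0 by auto
  have e3: "N3 \<ge> 0 \<and> (N3 = 0 \<longleftrightarrow> a2 = 0 \<and> a3 = 0)"
  proof -
    have "N3 = 0 \<longleftrightarrow> s1*s2*c3 = 0 \<and> c1*c2*s3 = 0" unfolding N3_def
      by (simp add: sum_power2_eq_zero_iff)
    also have "\<dots> \<longleftrightarrow> a2 = 0 \<and> a3 = 0" using cp s0 assms by auto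
    finally show ?thesis unfolding N3_def by simp
  qed
  show ?thesis unfolding z0 z1 z2 z3 using e01 e12 e23 e3 by simp
qed

end
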